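(* Let $E$ be a finite-dimensional real or complex inner product space with an orthogonal direct sum decomposition $E=X_1\oplus X_2\oplus Y$. Fix $a_1\in X_1$, $a_2\in X_2$, $b_1,b_2\in Y$, and let $C_1=X_1+a_2+b_1$ and $C_2=a_1+X_2+b_2$. Let $\pi_i\colon E\to E$ be the orthogonal (nearest-point) projection onto the affine subspace $C_i$, $i=1,2$. For real $\gamma_1,\gamma_2$ and nonzero real $\beta$ define $f_i(\rho)=(1+\gamma_i)\pi_i(\rho)-\gamma_i\rho$ and $D(\rho)=\rho+\beta\big(\pi_1(f_2(\rho))-\pi_2(f_1(\rho))\big)$. Then for all $x_1\in X_1$, $x_2\in X_2$, $y\in Y$, $$D(x_1+x_2+y)=a_1+a_2+y+(1-\beta\gamma_2)(x_1-a_1)+(1+\beta\gamma_1)(x_2-a_2)+\beta(b_1-b_2).$$ Consequently: (i) if $b_1=b_2=b$, the iterates $D^n(\rho)$ converge for every starting point $\rho=x_1+x_2+y$ to the point $\rho^*=a_1+a_2+y$ whenever $0<\beta\gamma_2<2$ and $-2<\beta\gamma_1<0$, and $\pi_1(f_2(\rho^* ))=a_1+a_2+b\in C_1\cap C_2$; (ii) for the choice $\gamma_2=\beta^{-1}$, $\gamma_1=-\beta^{-1}$ one has, for all $n\ge 1$, $D^n(x_1+x_2+y)=a_1+a_2+y+n\beta(b_1-b_2)$; in particular, when $b_1=b_2$ every point is mapped to a fixed point of $D$ in a single iteration.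
   Context: This describes the local behaviour of the "difference map" built from two projections near a point where two (locally affine, mutually orthogonal) constraint sets $C_1$, $C_2$ either intersect ($b_1=b_2$) or come closest without intersecting ($b_1\ne b_2$). *)

theory Defs
  imports "HOL-Analysis.Analysis"
begin

definition relax :: "('a::real_vector \<Rightarrow> 'a) \<Rightarrow> real \<Rightarrow> 'a \<Rightarrow> 'a" where
  "relax p g \<rho> = (1 + g) *\<^sub>R p \<rho> - g *\<^sub>R \<rho>"

definition diffmap :: "'a::euclidean_space set \<Rightarrow> 'a set \<Rightarrow> real \<Rightarrow> real \<Rightarrow> real \<Rightarrow> 'a \<Rightarrow> 'a" where
  "diffmap C1 C2 \<beta> g1 g2 \<rho> =
     \<rho> + \<beta> *\<^sub>R (closest_point C1 (relax (closest_point C2) g2 \<rho>)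
                 - closest_point C2 (relax (closest_point C1) g1 \<rho>))"

end

theory Submission
  imports Defs
begin


lemma cp_lemma:
  fixes X :: "'a::euclidean_space set"
  assumes X: "subspace X" and S: "S = (\<lambda>x. x + c) ` X" and p: "p - c \<in> X"
    and orth: "\<forall>x\<in>X. inner (r - p) x = 0"
  shows "closest_point S r = p"
proof -
  have S': "S = (+) c ` X" using S by (auto simp: add.commute)
  have cv: "convex S" unfolding S' using convex_translation subspace_imp_convex[OF X] by blast
  have cl: "closed S" unfolding S' using closed_translation closed_subspace[OF X] by blast
  have pS: "p \<in> S" using p unfolding S' by (auto intro!: image_eqI[where x="p - c"])
  have "\<forall>z\<in>S. dist r p \<le> dist r z"
  proof
    fix z assume "z \<in> S"
    then obtain x where x: "x \<in> X" "z = c + x" unfolding S' by auto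
    have zp: "z - p \<in> X" using x p subspace_diff[OF X x(1) p] by (simp add: algebra_simps)
    have "(dist r z)^2 = (norm ((r - p) - (z - p)))^2" by (simp add: dist_norm)
    also have "\<dots> = (norm (r - p))^2 + (norm (z - p))^2"
    proof -
      have h: "inner (r - p) (z - p) = 0" using orth zp by blast
      have g: "\<And>u v::'a. inner u v = 0 \<Longrightarrow> (norm (u - v))^2 = (norm u)^2 + (norm v)^2"
        by (simp add: power2_norm_eq_inner inner_diff_left inner_diff_right inner_commute)
      show ?thesis using g[OF h] .
    qed
    finally have "(dist r p)^2 \<le> (dist r z)^2" by (simp add: dist_norm)
    then show "dist r p \<le> dist r z" by (simp add: power2_le_iff_abs_le)
  qed
  then show ?thesis using closest_point_unique[OF cv cl pS] by simp
qed

theorem mainTheorem3: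
  fixes X1 X2 Y :: "'a::euclidean_space set"
    and a1 a2 b1 b2 :: 'a
    and g1 g2 \<beta> :: real
  assumes "subspace X1" and "subspace X2" and "subspace Y"
    and "\<forall>x\<in>X1. \<forall>z\<in>X2. inner x z = 0"
    and "\<forall>x\<in>X1. \<forall>z\<in>Y. inner x z = 0"
    and "\<forall>x\<in>X2. \<forall>z\<in>Y. inner x z = 0"
    and "{x1 + x2 + y | x1 x2 y. x1 \<in> X1 \<and> x2 \<in> X2 \<and> y \<in> Y} = UNIV"
    and "a1 \<in> X1" and "a2 \<in> X2" and "b1 \<in> Y" and "b2 \<in> Y"
    and "C1 = (\<lambda>x. x + a2 + b1) ` X1"
    and "C2 = (\<lambda>x. a1 + x + b2) ` X2"
    and "\<beta> \<noteq> 0"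
  shows
    "(\<forall>x1\<in>X1. \<forall>x2\<in>X2. \<forall>y\<in>Y.
        diffmap C1 C2 \<beta> g1 g2 (x1 + x2 + y) =
          a1 + a2 + y + (1 - \<beta> * g2) *\<^sub>R (x1 - a1) + (1 + \<beta> * g1) *\<^sub>R (x2 - a2)
          + \<beta> *\<^sub>R (b1 - b2))
   \<and> ((b1 = b2 \<and> 0 < \<beta> * g2 \<and> \<beta> * g2 < 2 \<and> -2 < \<beta> * g1 \<and> \<beta> * g1 < 0) \<longrightarrow>
        (\<forall>x1\<in>X1. \<forall>x2\<in>X2. \<forall>y\<in>Y.
           (\<lambda>n. (diffmap C1 C2 \<beta> g1 g2 ^^ n) (x1 + x2 + y)) \<longlonglongrightarrow> a1 + a2 + y
           \<and> closest_point C1 (relax (closest_point C2) g2 (a1 + a2 + y)) = a1 + a2 + b1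
           \<and> a1 + a2 + b1 \<in> C1 \<inter> C2))
   \<and> (\<forall>n::nat. n \<ge> 1 \<longrightarrow> (\<forall>x1\<in>X1. \<forall>x2\<in>X2. \<forall>y\<in>Y.
        (diffmap C1 C2 \<beta> (- inverse \<beta>) (inverse \<beta>) ^^ n) (x1 + x2 + y) =
          a1 + a2 + y + (real n * \<beta>) *\<^sub>R (b1 - b2)))
   \<and> (b1 = b2 \<longrightarrow> (\<forall>\<rho>.
        diffmap C1 C2 \<beta> (- inverse \<beta>) (inverse \<beta>)
          (diffmap C1 C2 \<beta> (- inverse \<beta>) (inverse \<beta>) \<rho>)
        = diffmap C1 C2 \<beta> (- inverse \<beta>) (inverse \<beta>) \<rho>))"
  proof -
  note X1 = assms(1) and X2 = assms(2) and Y = assms(3)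
  note o12 = assms(4) and o1y = assms(5) and o2y = assms(6)
  have C1': "C1 = (\<lambda>x. x + (a2 + b1)) ` X1" using assms(12) by (auto simp: algebra_simps)
  have P1: "closest_point C1 (x1 + x2 + y) = x1 + a2 + b1" if "x1 \<in> X1" "x2 \<in> X2" "y \<in> Y" for x1 x2 y
  proof (rule cp_lemma[OF X1 C1'])
    show "x1 + a2 + b1 - (a2 + b1) \<in> X1" using that by simp
    show "\<forall>x\<in>X1. inner (x1 + x2 + y - (x1 + a2 + b1)) x = 0"
    proof
      fix x assume x: "x \<in> X1"
      have "x2 - a2 \<in> X2" using that assms(9) subspace_diff[OF X2] by blast
      moreover have "y - b1 \<in> Y" using that assms(10) subspace_diff[OF Y] by blast
      ultimately have "inner (x2 - a2) x = 0" "inner (y - b1) x = 0"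
        using o12 o1y x by (auto simp: inner_commute)
      moreover have "x1 + x2 + y - (x1 + a2 + b1) = (x2 - a2) + (y - b1)" by (simp add: algebra_simps)
      ultimately show "inner (x1 + x2 + y - (x1 + a2 + b1)) x = 0" by (metis inner_add_left add.right_neutral)
    qed
  qed
  have C2': "C2 = (\<lambda>x. x + (a1 + b2)) ` X2" using assms(13) by (auto simp: algebra_simps)
  have P2: "closest_point C2 (x1 + x2 + y) = a1 + x2 + b2" if "x1 \<in> X1" "x2 \<in> X2" "y \<in> Y" for x1 x2 y
  proof (rule cp_lemma[OF X2 C2'])
    show "a1 + x2 + b2 - (a1 + b2) \<in> X2" using that by simp
    show "\<forall>x\<in>X2. inner (x1 + x2 + y - (a1 + x2 + b2)) x = 0"
    proof
      fix x assume x: "x \<in> X2"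
      have "x1 - a1 \<in> X1" using that assms(8) subspace_diff[OF X1] by blast
      moreover have "y - b2 \<in> Y" using that assms(11) subspace_diff[OF Y] by blast
      ultimately have "inner (x1 - a1) x = 0" "inner (y - b2) x = 0"
        using o12 o2y x by (auto simp: inner_commute)
      moreover have "x1 + x2 + y - (a1 + x2 + b2) = (x1 - a1) + (y - b2)" by (simp add: algebra_simps)
      ultimately show "inner (x1 + x2 + y - (a1 + x2 + b2)) x = 0" by (metis inner_add_left add.right_neutral)
    qed
  qed
  have D: "diffmap C1 C2 \<beta> h1 h2 (x1 + x2 + y) =
          a1 + a2 + y + (1 - \<beta> * h2) *\<^sub>R (x1 - a1) + (1 + \<beta> * h1) *\<^sub>R (x2 - a2)
          + \<beta> *\<^sub>R (b1 - b2)" if "x1 \<in> X1" "x2 \<in> X2" "y \<in> Y" for x1 x2 y h1 h2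
  proof -
    have e2: "relax (closest_point C2) h2 (x1 + x2 + y) =
       ((1 + h2) *\<^sub>R a1 - h2 *\<^sub>R x1) + x2 + ((1 + h2) *\<^sub>R b2 - h2 *\<^sub>R y)"
      unfolding relax_def P2[OF that] by (simp add: algebra_simps)
    have e1: "relax (closest_point C1) h1 (x1 + x2 + y) =
       x1 + ((1 + h1) *\<^sub>R a2 - h1 *\<^sub>R x2) + ((1 + h1) *\<^sub>R b1 - h1 *\<^sub>R y)"
      unfolding relax_def P1[OF that] by (simp add: algebra_simps)
    have m1: "(1 + h2) *\<^sub>R a1 - h2 *\<^sub>R x1 \<in> X1"
      using that assms(8) X1 by (simp add: subspace_diff subspace_mul)
    have m2: "(1 + h2) *\<^sub>R b2 - h2 *\<^sub>R y \<in> Y"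
      using that assms(11) Y by (simp add: subspace_diff subspace_mul)
    have m3: "(1 + h1) *\<^sub>R a2 - h1 *\<^sub>R x2 \<in> X2"
      using that assms(9) X2 by (simp add: subspace_diff subspace_mul)
    have m4: "(1 + h1) *\<^sub>R b1 - h1 *\<^sub>R y \<in> Y"
      using that assms(10) Y by (simp add: subspace_diff subspace_mul)
    show ?thesis
      unfolding diffmap_def e1 e2 P1[OF m1 that(2) m2] P2[OF that(1) m3 m4]
      by (simp add: algebra_simps)
  qed
  define Dm where "Dm = diffmap C1 C2 \<beta> (- inverse \<beta>) (inverse \<beta>)"
  have Dm: "Dm (x1 + x2 + y) = a1 + a2 + (y + \<beta> *\<^sub>R (b1 - b2))"
    if "x1 \<in> X1" "x2 \<in> X2" "y \<in> Y" for x1 x2 y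
    unfolding Dm_def D[OF that] using assms(14) by (simp add: algebra_simps)
  have yb: "y + c *\<^sub>R (b1 - b2) \<in> Y" if "y \<in> Y" for y c
    using that assms(10,11) Y by (simp add: subspace_add subspace_diff subspace_mul)
  have PC: "(Dm ^^ Suc m) (x1 + x2 + y) = a1 + a2 + (y + (real (Suc m) * \<beta>) *\<^sub>R (b1 - b2))"
    if "x1 \<in> X1" "x2 \<in> X2" "y \<in> Y" for x1 x2 y m
  proof (induction m)
    case 0 then show ?case using Dm[OF that] by simp
  next
    case (Suc m)
    have "(Dm ^^ Suc (Suc m)) (x1 + x2 + y) = Dm (a1 + a2 + (y + (real (Suc m) * \<beta>) *\<^sub>R (b1 - b2)))"
      using Suc by simp
    also have "\<dots> = a1 + a2 + ((y + (real (Suc m) * \<beta>) *\<^sub>R (b1 - b2)) + \<beta> *\<^sub>R (b1 - b2))"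
      using Dm[OF assms(8,9) yb[OF that(3)]] .
    also have "\<dots> = a1 + a2 + (y + (real (Suc (Suc m)) * \<beta>) *\<^sub>R (b1 - b2))"
    proof -
      have "real (Suc (Suc m)) * \<beta> = real (Suc m) * \<beta> + \<beta>" by (simp add: algebra_simps)
      then show ?thesis by (simp only: scaleR_add_left add.assoc)
    qed
    finally show ?case .
  qed
  have partC: "\<forall>n::nat. n \<ge> 1 \<longrightarrow> (\<forall>x1\<in>X1. \<forall>x2\<in>X2. \<forall>y\<in>Y.
        (Dm ^^ n) (x1 + x2 + y) = a1 + a2 + y + (real n * \<beta>) *\<^sub>R (b1 - b2))"
  proof (intro allI impI ballI)
    fix n :: nat and x1 x2 y assume n: "n \<ge> 1" and x: "x1 \<in> X1" "x2 \<in> X2" "y \<in> Y"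
    then obtain m where "n = Suc m" by (cases n) auto
    then show "(Dm ^^ n) (x1 + x2 + y) = a1 + a2 + y + (real n * \<beta>) *\<^sub>R (b1 - b2)"
      using PC[OF x, of m] by (simp add: add.assoc)
  qed
  have partD: "b1 = b2 \<longrightarrow> (\<forall>\<rho>. Dm (Dm \<rho>) = Dm \<rho>)"
  proof (intro impI allI)
    fix \<rho> assume bb: "b1 = b2"
    obtain x1 x2 y where x: "x1 \<in> X1" "x2 \<in> X2" "y \<in> Y" and r: "\<rho> = x1 + x2 + y"
    proof -
      have "\<rho> \<in> {x1 + x2 + y | x1 x2 y. x1 \<in> X1 \<and> x2 \<in> X2 \<and> y \<in> Y}" using assms(7) by simp
      then show ?thesis using that by blast
    qed
    show "Dm (Dm \<rho>) = Dm \<rho>"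
      unfolding r Dm[OF x] using Dm[OF assms(8,9) yb[OF x(3)]] bb by simp
  qed
  have partB: "(b1 = b2 \<and> 0 < \<beta> * g2 \<and> \<beta> * g2 < 2 \<and> -2 < \<beta> * g1 \<and> \<beta> * g1 < 0) \<longrightarrow>
        (\<forall>x1\<in>X1. \<forall>x2\<in>X2. \<forall>y\<in>Y.
           (\<lambda>n. (diffmap C1 C2 \<beta> g1 g2 ^^ n) (x1 + x2 + y)) \<longlonglongrightarrow> a1 + a2 + y
           \<and> closest_point C1 (relax (closest_point C2) g2 (a1 + a2 + y)) = a1 + a2 + b1
           \<and> a1 + a2 + b1 \<in> C1 \<inter> C2)"
  proof (intro impI ballI)
    fix x1 x2 y assume H: "b1 = b2 \<and> 0 < \<beta> * g2 \<and> \<beta> * g2 < 2 \<and> -2 < \<beta> * g1 \<and> \<beta> * g1 < 0"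
      and x: "x1 \<in> X1" "x2 \<in> X2" "y \<in> Y"
    define q1 where "q1 = 1 + \<beta> * g1"
    define q2 where "q2 = 1 - \<beta> * g2"
    let ?G = "diffmap C1 C2 \<beta> g1 g2"
    have it: "(?G ^^ n) (x1 + x2 + y) = (a1 + q2 ^ n *\<^sub>R (x1 - a1)) + (a2 + q1 ^ n *\<^sub>R (x2 - a2)) + y" for n
    proof (induction n)
      case 0 then show ?case by simp
    next
      case (Suc n)
      have m1: "a1 + q2 ^ n *\<^sub>R (x1 - a1) \<in> X1" using x assms(8) X1 by (simp add: subspace_add subspace_diff subspace_mul)
      have m2: "a2 + q1 ^ n *\<^sub>R (x2 - a2) \<in> X2" using x assms(9) X2 by (simp add: subspace_add subspace_diff subspace_mul)
      have "(?G ^^ Suc n) (x1 + x2 + y) = ?G ((a1 + q2 ^ n *\<^sub>R (x1 - a1)) + (a2 + q1 ^ n *\<^sub>R (x2 - a2)) + y)"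
        using Suc by simp
      also have "\<dots> = a1 + a2 + y + q2 *\<^sub>R (q2 ^ n *\<^sub>R (x1 - a1)) + q1 *\<^sub>R (q1 ^ n *\<^sub>R (x2 - a2))"
        unfolding D[OF m1 m2 x(3)] using H by (simp add: q1_def q2_def)
      also have "\<dots> = (a1 + q2 ^ Suc n *\<^sub>R (x1 - a1)) + (a2 + q1 ^ Suc n *\<^sub>R (x2 - a2)) + y"
        by (simp add: algebra_simps)
      finally show ?case .
    qed
    have n1: "norm q1 < 1" and n2: "norm q2 < 1" using H by (auto simp: q1_def q2_def)
    have l1: "(\<lambda>n. q1 ^ n) \<longlonglongrightarrow> 0" by (rule LIMSEQ_power_zero[OF n1])
    have l2: "(\<lambda>n. q2 ^ n) \<longlonglongrightarrow> 0" by (rule LIMSEQ_power_zero[OF n2])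
    have "(\<lambda>n. (a1 + q2 ^ n *\<^sub>R (x1 - a1)) + (a2 + q1 ^ n *\<^sub>R (x2 - a2)) + y)
         \<longlonglongrightarrow> (a1 + 0 *\<^sub>R (x1 - a1)) + (a2 + 0 *\<^sub>R (x2 - a2)) + y"
      by (intro tendsto_intros l1 l2)
    then show "(\<lambda>n. (?G ^^ n) (x1 + x2 + y)) \<longlonglongrightarrow> a1 + a2 + y
           \<and> closest_point C1 (relax (closest_point C2) g2 (a1 + a2 + y)) = a1 + a2 + b1
           \<and> a1 + a2 + b1 \<in> C1 \<inter> C2"
    proof (intro conjI)
      assume "(\<lambda>n. (a1 + q2 ^ n *\<^sub>R (x1 - a1)) + (a2 + q1 ^ n *\<^sub>R (x2 - a2)) + y)
         \<longlonglongrightarrow> (a1 + 0 *\<^sub>R (x1 - a1)) + (a2 + 0 *\<^sub>R (x2 - a2)) + y"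
      then show "(\<lambda>n. (?G ^^ n) (x1 + x2 + y)) \<longlonglongrightarrow> a1 + a2 + y" unfolding it by simp
    next
      have "relax (closest_point C2) g2 (a1 + a2 + y) = a1 + a2 + ((1 + g2) *\<^sub>R b2 - g2 *\<^sub>R y)"
        unfolding relax_def P2[OF assms(8,9) x(3)] by (simp add: algebra_simps)
      moreover have "(1 + g2) *\<^sub>R b2 - g2 *\<^sub>R y \<in> Y"
        using x assms(11) Y by (simp add: subspace_diff subspace_mul)
      ultimately show "closest_point C1 (relax (closest_point C2) g2 (a1 + a2 + y)) = a1 + a2 + b1"
        using P1[OF assms(8,9)] by simp
    next
      show "a1 + a2 + b1 \<in> C1 \<inter> C2"
        using H assms(8,9) unfolding assms(12,13) by (auto simp: algebra_simps)
    qed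
  qed
  show ?thesis using D partB partC partD unfolding Dm_def by blast
qed

end
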